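(* Consider the anti-coordination game ($\mathcal V_a=\mathcal V$). (1) If $x^*$ is a Nash equilibrium and $z^*=z(x^* )$, then for every $\epsilon_a\in(\tfrac1n,\tfrac2n]$, $$G_a\!\left(\tfrac{n}{n-1}(z^*-\epsilon_a)\right)\ \ge\ z^*\ \ge\ G_a\!\left(\tfrac{n}{n-1}z^*\right).$$ (2) Conversely, if $z^*\in\{0,\tfrac1n,\dots,1\}$ satisfies these inequalities for every $\epsilon_a\in(\tfrac1n,\tfrac2n]$, then there exists a Nash equilibrium $x^*$ with $z(x^* )=z^*$.
   Context: Let $\mathcal V$ be a finite set of $n\ge2$ agents, all anti-coordinating. Given real weights $d_i$, the anti-coordination game has action set $\{-1,+1\}$, configuration space $\mathcal X=\{-1,+1\}^{\mathcal V}$ and utilities $u_i(x)=-\big(\sum_{j\neq i}x_ix_j-d_ix_i\big)$. A (pure) Nash equilibrium is an $x\in\mathcal X$ with $u_i(x)\ge u_i(y_i,x_{-i})$ for all $i$ and $y_i\in\{-1,+1\}$. Thresholds: $r_i=\tfrac12+\tfrac{d_i}{2(n-1)}$. For $x\in\mathcal X$, $z(x)=\frac1n|\{i: x_i=+1\}|$. The threshold complementary CDF is $G_a(t)=\frac1n|\{i\in\mathcal V: r_i> t\}|$, $t\in\mathbb R$. *)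

theory Defs
  imports "HOL-Analysis.Analysis" "HOL-Library.FuncSet"
begin

definition configs :: "'a set \<Rightarrow> ('a \<Rightarrow> real) set" where
  "configs V = V \<rightarrow>\<^sub>E {-1, 1}"

definition util_a :: "'a set \<Rightarrow> ('a \<Rightarrow> real) \<Rightarrow> 'a \<Rightarrow> ('a \<Rightarrow> real) \<Rightarrow> real" where
  "util_a V d i x = - ((\<Sum>j\<in>V - {i}. x i * x j) - d i * x i)"

definition nash_a :: "'a set \<Rightarrow> ('a \<Rightarrow> real) \<Rightarrow> ('a \<Rightarrow> real) \<Rightarrow> bool" where
  "nash_a V d x \<longleftrightarrow> x \<in> configs V \<and>
     (\<forall>i\<in>V. \<forall>y\<in>{-1, 1::real}. util_a V d i x \<ge> util_a V d i (x(i := y)))"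

definition thr :: "'a set \<Rightarrow> ('a \<Rightarrow> real) \<Rightarrow> 'a \<Rightarrow> real" where
  "thr V d i = 1/2 + d i / (2 * (real (card V) - 1))"

definition zfrac :: "'a set \<Rightarrow> ('a \<Rightarrow> real) \<Rightarrow> real" where
  "zfrac V x = real (card {i\<in>V. x i = 1}) / real (card V)"

definition Ga :: "'a set \<Rightarrow> ('a \<Rightarrow> real) \<Rightarrow> real \<Rightarrow> real" where
  "Ga V d t = real (card {i\<in>V. thr V d i > t}) / real (card V)"

end

theory Submission imports Defs begin

lemma sum_conf:
  assumes "finite V" "x \<in> configs V"
  shows "(\<Sum>j\<in>V. x j) = 2 * real (card {i\<in>V. x i = 1}) - real (card V)"
proof -
  let ?P = "{i\<in>V. x i = 1}"
  have val: "\<And>j. j \<in> V \<Longrightarrow> x j = 1 \<or> x j = -1" using assms(2) unfolding configs_def by auto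
  have "(\<Sum>j\<in>V. x j) = (\<Sum>j\<in>?P. x j) + (\<Sum>j\<in>V - ?P. x j)"
    using assms(1) by (metis (no_types, lifting) Diff_partition mem_Collect_eq subsetI sum.subset_diff add.commute)
  also have "(\<Sum>j\<in>?P. x j) = (\<Sum>j\<in>?P. 1)" by simp
  also have "(\<Sum>j\<in>V - ?P. x j) = (\<Sum>j\<in>V - ?P. -1)" using val by (intro sum.cong) auto
  also have "card (V - ?P) = card V - card ?P" using assms(1) by (intro card_Diff_subset) auto
  moreover have "card ?P \<le> card V" using assms(1) by (intro card_mono) auto
  ultimately show ?thesis by (simp add: of_nat_diff)
qed

lemma util_upd:
  assumes "finite V" "i \<in> V"
  shows "util_a V d i (x(i:=y)) = -(y * ((\<Sum>j\<in>V. x j) - x i) - d i * y)"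
proof -
  have "(\<Sum>j\<in>V - {i}. (x(i:=y)) i * (x(i:=y)) j) = y * (\<Sum>j\<in>V - {i}. x j)"
    by (simp add: sum_distrib_left)
  also have "(\<Sum>j\<in>V - {i}. x j) = (\<Sum>j\<in>V. x j) - x i" using assms by (simp add: sum_diff1)
  finally show ?thesis unfolding util_a_def by simp
qed

lemma alg1: "(c::real) > 0 \<Longrightarrow> (1/2 + D / (2*c)) - (m - 1)/c = (D - 2*m + c + 2)/(2*c)"
  by (simp add: field_simps)
lemma alg2: "(c::real) > 0 \<Longrightarrow> m/c - (1/2 + D / (2*c)) = (2*m - c - D)/(2*c)"
  by (simp add: field_simps)

lemma nash_iff:
  assumes "finite V" "card V \<ge> 2" "x \<in> configs V"
  shows "nash_a V d x \<longleftrightarrow> (\<forall>i\<in>V. (x i = 1 \<longrightarrow> thr V d i \<ge> (real (card {i\<in>V. x i = 1}) - 1)/(real (card V) - 1))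
        \<and> (x i \<noteq> 1 \<longrightarrow> thr V d i \<le> real (card {i\<in>V. x i = 1})/(real (card V) - 1)))"
proof -
  define m where "m = real (card {i\<in>V. x i = 1})"
  define n where "n = real (card V)"
  have n1: "n - 1 > 0" using assms(2) unfolding n_def by simp
  have S: "(\<Sum>j\<in>V. x j) = 2*m - n" using sum_conf[OF assms(1,3)] m_def n_def by simp
  have val: "\<And>j. j \<in> V \<Longrightarrow> x j = 1 \<or> x j = -1" using assms(3) unfolding configs_def by auto
  have loc: "(\<forall>y\<in>{-1, 1::real}. util_a V d i x \<ge> util_a V d i (x(i := y))) \<longleftrightarrow>
     ((x i = 1 \<longrightarrow> thr V d i \<ge> (m - 1)/(n - 1)) \<and> (x i \<noteq> 1 \<longrightarrow> thr V d i \<le> m/(n - 1)))"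
    if i: "i \<in> V" for i
  proof -
    have u0: "util_a V d i x = -(x i * ((\<Sum>j\<in>V. x j) - x i) - d i * x i)"
      using util_upd[OF assms(1) i, of d x "x i"] by simp
    have th: "thr V d i = 1/2 + d i / (2*(n-1))" unfolding thr_def n_def by simp
    have e1': "(1/2 + d i / (2*(n-1))) - (m - 1)/(n - 1) = (d i - 2*m + n + 1)/(2*(n-1))"
      using alg1[OF n1, of "d i" m] by simp
    have e1: "(m - 1)/(n - 1) \<le> 1/2 + d i / (2*(n-1)) \<longleftrightarrow> 2*m - n - 1 \<le> d i"
    proof -
      have "(m - 1)/(n - 1) \<le> 1/2 + d i / (2*(n-1)) \<longleftrightarrow> 0 \<le> (d i - 2*m + n + 1)/(2*(n-1))"
        using e1' by linarith
      also have "\<dots> \<longleftrightarrow> 0 \<le> d i - 2*m + n + 1" using n1 by (simp add: zero_le_divide_iff)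
      finally show ?thesis by linarith
    qed
    have e2': "m/(n-1) - (1/2 + d i / (2*(n-1))) = (2*m - n + 1 - d i)/(2*(n-1))"
      using alg2[OF n1, of m "d i"] by simp
    have e2: "1/2 + d i / (2*(n-1)) \<le> m/(n-1) \<longleftrightarrow> 2*m - n + 1 \<ge> d i"
    proof -
      have "1/2 + d i / (2*(n-1)) \<le> m/(n-1) \<longleftrightarrow> 0 \<le> (2*m - n + 1 - d i)/(2*(n-1))"
        using e2' by linarith
      also have "\<dots> \<longleftrightarrow> 0 \<le> 2*m - n + 1 - d i" using n1 by (simp add: zero_le_divide_iff)
      finally show ?thesis by linarith
    qed
    show ?thesis
      using val[OF i] unfolding u0 util_upd[OF assms(1) i] S th e1 e2 by auto
  qed
  show ?thesis unfolding nash_a_def using loc assms(3) m_def n_def by auto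
qed

theorem corollary2:
  fixes V :: "'a set" and d :: "'a \<Rightarrow> real"
  assumes "finite V" and "card V \<ge> 2"
  defines "n \<equiv> real (card V)"
  shows "(\<forall>x. nash_a V d x \<longrightarrow>
            (\<forall>\<epsilon>. 1/n < \<epsilon> \<and> \<epsilon> \<le> 2/n \<longrightarrow>
               Ga V d (n/(n-1) * (zfrac V x - \<epsilon>)) \<ge> zfrac V x \<and>
               zfrac V x \<ge> Ga V d (n/(n-1) * zfrac V x)))
       \<and> (\<forall>z. (\<exists>k::nat. k \<le> card V \<and> z = real k / n) \<longrightarrow>
            (\<forall>\<epsilon>. 1/n < \<epsilon> \<and> \<epsilon> \<le> 2/n \<longrightarrow>
               Ga V d (n/(n-1) * (z - \<epsilon>)) \<ge> z \<and> z \<ge> Ga V d (n/(n-1) * z)) \<longrightarrow>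
            (\<exists>x. nash_a V d x \<and> zfrac V x = z))"
proof (intro conjI allI impI)
  have n1: "n - 1 > 0" and n0: "n > 0" using assms(2) unfolding n_def by auto
  let ?r = "thr V d"
  {
    fix x \<epsilon> assume nx: "nash_a V d x" and e: "1/n < \<epsilon> \<and> \<epsilon> \<le> 2/n"
    have cx: "x \<in> configs V" using nx unfolding nash_a_def by auto
    define m where "m = real (card {i\<in>V. x i = 1})"
    have NI: "\<forall>i\<in>V. (x i = 1 \<longrightarrow> ?r i \<ge> (m - 1)/(n - 1)) \<and> (x i \<noteq> 1 \<longrightarrow> ?r i \<le> m/(n - 1))"
      using nash_iff[OF assms(1,2) cx, of d] nx unfolding m_def n_def by simp
    have z: "zfrac V x = m / n" unfolding zfrac_def m_def n_def by simp
    have t1: "n/(n-1) * (zfrac V x - \<epsilon>) = (m - n*\<epsilon>)/(n-1)" unfolding z using n0 n1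
      by (simp add: field_simps)
    have ne: "n * \<epsilon> > 1" using e n0 by (simp add: field_simps)
    have lt: "(m - n*\<epsilon>)/(n-1) < (m - 1)/(n-1)" using ne n1 by (simp add: divide_strict_right_mono)
    have "{i\<in>V. x i = 1} \<subseteq> {i\<in>V. ?r i > (m - n*\<epsilon>)/(n-1)}" using NI lt by force
    hence "m \<le> real (card {i\<in>V. ?r i > (m - n*\<epsilon>)/(n-1)})" unfolding m_def
      using assms(1) by (simp add: card_mono)
    hence A: "Ga V d (n/(n-1) * (zfrac V x - \<epsilon>)) \<ge> zfrac V x"
      unfolding t1 unfolding Ga_def z n_def[symmetric] using n0 by (simp add: divide_right_mono)
    have t2: "n/(n-1) * zfrac V x = m/(n-1)" unfolding z using n0 n1 by simp
    have "{i\<in>V. ?r i > m/(n-1)} \<subseteq> {i\<in>V. x i = 1}" using NI by force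
    hence "real (card {i\<in>V. ?r i > m/(n-1)}) \<le> m" unfolding m_def
      using assms(1) by (simp add: card_mono)
    hence B: "zfrac V x \<ge> Ga V d (n/(n-1) * zfrac V x)"
      unfolding t2 unfolding Ga_def z n_def[symmetric] using n0 by (simp add: divide_right_mono)
    show "Ga V d (n/(n-1) * (zfrac V x - \<epsilon>)) \<ge> zfrac V x" using A .
    show "zfrac V x \<ge> Ga V d (n/(n-1) * zfrac V x)" using B .
  next
    fix z assume "\<exists>k::nat. k \<le> card V \<and> z = real k / n"
    then obtain k where k: "k \<le> card V" "z = real k / n" by auto
    assume H: "\<forall>\<epsilon>. 1/n < \<epsilon> \<and> \<epsilon> \<le> 2/n \<longrightarrow>
               Ga V d (n/(n-1) * (z - \<epsilon>)) \<ge> z \<and> z \<ge> Ga V d (n/(n-1) * z)"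
    define a where "a = (real k - 1)/(n-1)"
    define b where "b = real k/(n-1)"
    have ab: "a \<le> b" unfolding a_def b_def using n1 by (simp add: divide_right_mono)
    define L where "L = {i\<in>V. ?r i < a}"
    have finL: "finite L" using assms(1) unfolding L_def by simp
    have ka: "(real k - 2)/(n-1) < a" unfolding a_def using n1 by (simp add: divide_strict_right_mono)
    obtain t where t: "(real k - 2)/(n-1) \<le> t" "t < a" "\<forall>i\<in>L. ?r i < t"
    proof (cases "L = {}")
      case True
      show ?thesis by (rule that[of "(real k - 2)/(n-1)"]) (use True ka in auto)
    next
      case False
      define M where "M = Max (?r ` L)"
      have M: "M < a" using False finL unfolding M_def L_def by auto
      have Mi: "\<forall>i\<in>L. ?r i \<le> M" using finL unfolding M_def by auto
      show ?thesis
        by (rule that[of "max ((real k - 2)/(n-1)) ((M + a)/2)"])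
           (use M ka in \<open>simp_all\<close>, use M Mi in \<open>force intro: less_le_trans[OF _ max.cobounded2]\<close>)
    qed
    define \<epsilon> where "\<epsilon> = (real k - t*(n-1))/n"
    have teq: "n/(n-1) * (z - \<epsilon>) = t" unfolding \<epsilon>_def k(2) using n0 n1 by (simp add: field_simps)
    have e1: "1/n < \<epsilon>"
    proof -
      have "t*(n-1) < real k - 1" using t(2) n1 unfolding a_def by (simp add: pos_less_divide_eq)
      thus ?thesis unfolding \<epsilon>_def using n0 by (simp add: divide_strict_right_mono)
    qed
    have e2: "\<epsilon> \<le> 2/n"
    proof -
      have "real k - 2 \<le> t*(n-1)" using t(1) n1 by (simp add: pos_divide_le_eq)
      thus ?thesis unfolding \<epsilon>_def using n0 by (simp add: divide_right_mono)
    qed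
    have HH: "Ga V d t \<ge> z" "z \<ge> Ga V d b"
      using H[rule_format, of \<epsilon>] e1 e2 teq unfolding b_def k(2) using n0 n1 by auto
    define A where "A = {i\<in>V. ?r i > b}"
    define B where "B = {i\<in>V. ?r i \<ge> a}"
    have AB: "A \<subseteq> B" unfolding A_def B_def using ab by auto
    have BV: "B \<subseteq> V" unfolding B_def by auto
    have finB: "finite B" using BV assms(1) finite_subset by blast
    have cA: "card A \<le> k"
    proof -
      have "real (card A) / n \<le> real k / n" using HH(2) unfolding Ga_def A_def k(2) n_def by simp
      thus ?thesis using n0 by (simp add: divide_le_cancel)
    qed
    have cB: "k \<le> card B"
    proof -
      have "{i\<in>V. ?r i > t} \<subseteq> B" unfolding B_def L_def using t(3) unfolding L_def by force
      hence "card {i\<in>V. ?r i > t} \<le> card B" using finB by (simp add: card_mono)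
      moreover have "real k / n \<le> real (card {i\<in>V. ?r i > t}) / n" using HH(1) unfolding Ga_def k(2) n_def by simp
      hence "k \<le> card {i\<in>V. ?r i > t}" using n0 by (simp add: divide_le_cancel)
      ultimately show ?thesis by simp
    qed
    have "card (B - A) = card B - card A" using AB finB by (simp add: card_Diff_subset finite_subset)
    then obtain Q where Q: "Q \<subseteq> B - A" "card Q = k - card A"
    proof -
      have "k - card A \<le> card (B - A)" using \<open>card (B - A) = card B - card A\<close> cB by simp
      then obtain T where "T \<subseteq> B - A" "card T = k - card A" "finite T"
        by (rule obtain_subset_with_card_n)
      thus ?thesis using that by blast
    qed
    define P where "P = A \<union> Q"
    have PB: "P \<subseteq> B" using Q AB unfolding P_def by auto
    have finQ: "finite Q" using Q(1) finB finite_subset by blast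
    have finA: "finite A" using AB finB finite_subset by blast
    have cP: "card P = k" unfolding P_def using Q cA finQ finA
      by (subst card_Un_disjoint) auto
    define x where "x = restrict (\<lambda>i. if i \<in> P then 1 else -1::real) V"
    have cx: "x \<in> configs V" unfolding configs_def x_def by auto
    have Px: "{i\<in>V. x i = 1} = P" using PB BV unfolding x_def by auto
    have zx: "zfrac V x = z" unfolding zfrac_def Px cP k(2) n_def by simp
    have "nash_a V d x"
    proof (subst nash_iff[OF assms(1,2) cx], intro ballI conjI impI)
      fix i assume i: "i \<in> V"
      { assume "x i = 1" hence "i \<in> B" using i Px PB by auto
        thus "(real (card {i\<in>V. x i = 1}) - 1)/(real (card V) - 1) \<le> ?r i"
          unfolding Px cP B_def a_def n_def by simp }
      { assume "x i \<noteq> 1" hence "i \<notin> A" using i Px unfolding P_def by auto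
        thus "?r i \<le> real (card {i\<in>V. x i = 1})/(real (card V) - 1)"
          using i unfolding Px cP A_def b_def n_def by simp }
    qed
    thus "\<exists>x. nash_a V d x \<and> zfrac V x = z" using zx by blast
  }
qed

end
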